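(* There exists a polynomial-time computable total functional $F\colon\mathcal B\to\mathcal B$ that is not computed by any oracle Turing machine with finite length-revision. In particular, $F$ is not strongly polynomial-time computable, so the class of strongly polynomial-time computable functionals is a proper subclass of the class of polynomial-time computable functionals.
   Context: $\Sigma=\{0,1\}$, $\mathcal B=(\Sigma^* )^{\Sigma^*}$ is the set of total string functions. An oracle Turing machine $M^?$ with oracle $\varphi$ replaces, upon entering its query state, the query-tape content $\mathbf b$ by $\varphi(\mathbf b)$ in one time step; $\operatorname{time}_{M^\varphi}(\mathbf a)\in\mathbb N\cup\{\infty\}$ is its number of steps on input $\mathbf a$. $M^?$ computes $F$ if $M^\varphi=F(\varphi)$ for all $\varphi\in\mathcal B$. Size function: $|\varphi|(n)=\max\{|\varphi(\mathbf a)|:|\mathbf a|\le n\}$. Second-order polynomials: smallest class of functions $\mathbb N^{\mathbb N}\times\mathbb N\to\mathbb N$ containing $(l,n)\mapsto p(n)$ for polynomials $p$ with natural coefficients, closed under pointwise sum, product and $P\mapsto P^+$, $P^+(l,n)=l(P(l,n))$. $F$ is polynomial-time computable if computed by a machine with $\operatorname{time}_{M^\varphi}(\mathbf a)\le P(|\varphi|,|\mathbf a|)$ for all $\varphi,\mathbf a$ for some second-order polynomial $P$. Length revision function: with $\mathbf b_k$ the content of the oracle answer tape at step $k$, $o_{\varphi,\mathbf a}(0)=|\mathbf a|$, $o_{\varphi,\mathbf a}(n+1)=\max\{o_{\varphi,\mathbf a}(n),|\mathbf b_{n+1}|\}$. $t\colon\mathbb N\to\mathbb N$ is a step-count for $M^?$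 if for all $\varphi,\mathbf a$ and all $n\le\operatorname{time}_{M^\varphi}(\mathbf a)$: $n\le t(o_{\varphi,\mathbf a}(n))$. $M^?$ has finite length-revision if there is $N$ with $\#o_{\varphi,\mathbf a}(\mathbb N)\le N$ for all $\varphi,\mathbf a$. $F$ is strongly polynomial-time computable if computed by a machine having finite length-revision and a polynomial step-count. *)

theory Defs
  imports "HOL-Computational_Algebra.Polynomial" "HOL-Library.Extended_Nat"
begin

type_synonym bstr = "bool list"
type_synonym bfun = "bstr \<Rightarrow> bstr"

definition size_fn :: "bfun \<Rightarrow> nat \<Rightarrow> nat" where
  "size_fn \<phi> n = Max ((\<lambda>a. length (\<phi> a)) ` {a :: bstr. length a \<le> n})"

inductive_set second_order_poly :: "((nat \<Rightarrow> nat) \<Rightarrow> nat \<Rightarrow> nat) set" where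
  sop_poly: "(\<lambda>l n. poly (p :: nat poly) n) \<in> second_order_poly"
| sop_add: "P \<in> second_order_poly \<Longrightarrow> Q \<in> second_order_poly \<Longrightarrow>
              (\<lambda>l n. P l n + Q l n) \<in> second_order_poly"
| sop_mult: "P \<in> second_order_poly \<Longrightarrow> Q \<in> second_order_poly \<Longrightarrow>
              (\<lambda>l n. P l n * Q l n) \<in> second_order_poly"
| sop_app: "P \<in> second_order_poly \<Longrightarrow> (\<lambda>l n. l (P l n)) \<in> second_order_poly"

text \<open>Tape symbols are natural numbers below nsyms; 0 is the blank, 1 encodes the bit 0
  (False) and 2 encodes the bit 1 (True). A tape is a finite list of written cells (all cells
  beyond it are blank) together with the head position; tapes are one-way infinite to the right.
  Tape 0 is the input tape, tape 1 the oracle (query) tape, tape 2 the output tape; further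
  tapes are work tapes.\<close>

type_synonym tape = "nat list \<times> nat"
type_synonym config = "nat \<times> tape list"

record otm =
  ntapes :: nat
  nstates :: nat
  nsyms :: nat
  delta :: "nat \<Rightarrow> nat list \<Rightarrow> nat \<times> nat list \<times> int list"
  q_start :: nat
  q_halt :: nat
  q_query :: nat
  q_answer :: nat

definition enc :: "bool \<Rightarrow> nat" where
  "enc b = (if b then 2 else 1)"

definition tape_read :: "tape \<Rightarrow> nat" where
  "tape_read t = (if snd t < length (fst t) then fst t ! snd t else 0)"

definition tape_write :: "nat \<Rightarrow> tape \<Rightarrow> tape" where
  "tape_write s t = (if snd t < length (fst t) then ((fst t)[snd t := s], snd t)
                     else (fst t @ replicate (snd t - length (fst t)) 0 @ [s], snd t))"

definition tape_move :: "int \<Rightarrow> tape \<Rightarrow> tape" where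
  "tape_move d t = (fst t, nat (int (snd t) + d))"

definition tape_content :: "tape \<Rightarrow> bstr" where
  "tape_content t = map (\<lambda>s. s = 2) (takeWhile (\<lambda>s. s = 1 \<or> s = 2) (fst t))"

definition wf_otm :: "otm \<Rightarrow> bool" where
  "wf_otm M \<longleftrightarrow> ntapes M \<ge> 3 \<and> nsyms M \<ge> 3 \<and>
     q_start M < nstates M \<and> q_halt M < nstates M \<and> q_query M < nstates M \<and>
     q_answer M < nstates M \<and> q_halt M \<noteq> q_query M \<and>
     (\<forall>q < nstates M. \<forall>rs. length rs = ntapes M \<and> set rs \<subseteq> {..<nsyms M} \<longrightarrow>
        (case delta M q rs of (q', ws, ds) \<Rightarrow>
           q' < nstates M \<and> length ws = ntapes M \<and> set ws \<subseteq> {..<nsyms M} \<and>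
           length ds = ntapes M \<and> set ds \<subseteq> {-1, 0, 1}))"

definition init_config :: "otm \<Rightarrow> bstr \<Rightarrow> config" where
  "init_config M a = (q_start M, (map enc a, 0) # replicate (ntapes M - 1) ([], 0))"

definition otm_step :: "otm \<Rightarrow> bfun \<Rightarrow> config \<Rightarrow> config" where
  "otm_step M \<phi> c = (let q = fst c; ts = snd c in
     if q = q_halt M then c
     else if q = q_query M then
       (q_answer M, ts[1 := (map enc (\<phi> (tape_content (ts ! 1))), 0)])
     else (case delta M q (map tape_read ts) of (q', ws, ds) \<Rightarrow>
       (q', map (\<lambda>((t, w), d). tape_move d (tape_write w t)) (zip (zip ts ws) ds))))"

definition otm_run :: "otm \<Rightarrow> bfun \<Rightarrow> bstr \<Rightarrow> nat \<Rightarrow> config" where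
  "otm_run M \<phi> a n = (otm_step M \<phi> ^^ n) (init_config M a)"

definition halted :: "otm \<Rightarrow> config \<Rightarrow> bool" where
  "halted M c \<longleftrightarrow> fst c = q_halt M"

definition otm_time :: "otm \<Rightarrow> bfun \<Rightarrow> bstr \<Rightarrow> enat" where
  "otm_time M \<phi> a = (if \<exists>n. halted M (otm_run M \<phi> a n)
                      then enat (LEAST n. halted M (otm_run M \<phi> a n)) else \<infinity>)"

definition computes :: "otm \<Rightarrow> (bfun \<Rightarrow> bstr \<Rightarrow> bstr) \<Rightarrow> bool" where
  "computes M F \<longleftrightarrow> wf_otm M \<and>
     (\<forall>\<phi> a. \<exists>n. halted M (otm_run M \<phi> a n) \<and>
                  tape_content (snd (otm_run M \<phi> a n) ! 2) = F \<phi> a)"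

definition poly_time_computable :: "(bfun \<Rightarrow> bstr \<Rightarrow> bstr) \<Rightarrow> bool" where
  "poly_time_computable F \<longleftrightarrow> (\<exists>M P. computes M F \<and> P \<in> second_order_poly \<and>
     (\<forall>\<phi> a. otm_time M \<phi> a \<le> enat (P (size_fn \<phi>) (length a))))"

fun length_rev :: "otm \<Rightarrow> bfun \<Rightarrow> bstr \<Rightarrow> nat \<Rightarrow> nat" where
  "length_rev M \<phi> a 0 = length a"
| "length_rev M \<phi> a (Suc n) =
     max (length_rev M \<phi> a n) (length (tape_content (snd (otm_run M \<phi> a (Suc n)) ! 1)))"

definition is_step_count :: "otm \<Rightarrow> (nat \<Rightarrow> nat) \<Rightarrow> bool" where
  "is_step_count M t \<longleftrightarrow> (\<forall>\<phi> a n. enat n \<le> otm_time M \<phi> a \<longrightarrow> n \<le> t (length_rev M \<phi> a n))"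

definition finite_length_revision :: "otm \<Rightarrow> bool" where
  "finite_length_revision M \<longleftrightarrow> (\<exists>N. \<forall>\<phi> a.
     finite (range (length_rev M \<phi> a)) \<and> card (range (length_rev M \<phi> a)) \<le> N)"

definition strongly_poly_time_computable :: "(bfun \<Rightarrow> bstr \<Rightarrow> bstr) \<Rightarrow> bool" where
  "strongly_poly_time_computable F \<longleftrightarrow> (\<exists>M p. computes M F \<and> finite_length_revision M \<and>
     is_step_count M (\<lambda>n. poly (p :: nat poly) n))"

end

theory Submission
  imports Defs
begin


lemma run_0: "otm_run M \<phi> a 0 = init_config M a"
  by (simp add: otm_run_def)

lemma run_Suc: "otm_run M \<phi> a (Suc n) = otm_step M \<phi> (otm_run M \<phi> a n)"
  by (simp add: otm_run_def)

lemma step_halted: "halted M c \<Longrightarrow> otm_step M \<phi> c = c"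
  by (simp add: otm_step_def halted_def Let_def)

lemma halted_stay: "halted M (otm_run M \<phi> a n) \<Longrightarrow> otm_run M \<phi> a (n + k) = otm_run M \<phi> a n"
  by (induction k) (simp_all add: run_Suc step_halted)

lemma halted_stay': "halted M (otm_run M \<phi> a n) \<Longrightarrow> n \<le> m \<Longrightarrow> otm_run M \<phi> a m = otm_run M \<phi> a n"
  using halted_stay[of M \<phi> a n "m - n"] by simp

lemma content_enc[simp]: "tape_content (map enc b, k) = b"
  by (induction b) (auto simp: tape_content_def enc_def)

definition d0 :: "nat \<Rightarrow> nat list \<Rightarrow> nat \<times> nat list \<times> int list" where
  "d0 q rs = (if q = 2 then (3, [rs!0, rs!1, rs!1], [0,0,0])
              else if rs!0 = 0 then (2, rs, [0,0,0]) else (1, rs, [1,0,0]))"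

definition M0 :: otm where
  "M0 = \<lparr>ntapes = 3, nstates = 4, nsyms = 3, delta = d0, q_start = 0, q_halt = 3,
         q_query = 1, q_answer = 0\<rparr>"

definition F0 :: "bfun \<Rightarrow> bstr \<Rightarrow> bstr" where
  "F0 \<phi> a = take 1 ((\<phi> ^^ length a) [])"

lemma wf_M0: "wf_otm M0"
proof -
  have "set [rs!0, rs!1, rs!1] \<subseteq> {..<3}" if "length rs = 3" "set rs \<subseteq> {..<3::nat}" for rs :: "nat list"
    using that by (auto simp: nth_mem subset_iff)
  then show ?thesis
    by (auto simp: wf_otm_def M0_def d0_def)
qed

definition good :: "nat list \<Rightarrow> bstr \<Rightarrow> bool" where
  "good x b \<longleftrightarrow> x = map enc b \<or> (b = [] \<and> x = [0])"

lemma good_content: "good x b \<Longrightarrow> tape_content (x, 0) = b"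
  using content_enc by (auto simp: good_def) (simp add: tape_content_def)

lemma good_read: "good x b \<Longrightarrow> tape_read (x, 0) = (case b of [] \<Rightarrow> 0 | h # _ \<Rightarrow> enc h)"
  by (cases b) (auto simp: good_def tape_read_def)

lemma good_wb: "good x b \<Longrightarrow> tape_move 0 (tape_write (tape_read (x, 0)) (x, 0)) = (x', 0) \<Longrightarrow> good x' b"
  by (cases b) (auto simp: good_def tape_read_def tape_write_def tape_move_def)

lemma tw_ne: "fst (tape_write s t) \<noteq> []"
  by (auto simp: tape_write_def)

lemma tw0: "tape_write s (x, 0) = (fst (tape_write s (x, 0)), 0)"
  by (simp add: tape_write_def)

lemma tape_move0[simp]: "tape_move 0 t = t"
  by (simp add: tape_move_def)

definition I0 :: "bfun \<Rightarrow> bstr \<Rightarrow> nat \<Rightarrow> config \<Rightarrow> bool" where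
  "I0 \<phi> a k c \<longleftrightarrow> (\<exists>x y. c = (0, [(map enc a, k), (x, 0), (y, 0)]) \<and> good x ((\<phi> ^^ k) []) \<and> (y = [] \<or> y = [0]))"

lemma M0_fields[simp]: "ntapes M0 = 3" "nstates M0 = 4" "nsyms M0 = 3" "delta M0 = d0"
  "q_start M0 = 0" "q_halt M0 = 3" "q_query M0 = 1" "q_answer M0 = 0"
  by (simp_all add: M0_def)

lemma I0_init: "I0 \<phi> a 0 (otm_run M0 \<phi> a 0)"
  by (simp add: run_0 init_config_def I0_def good_def numeral_3_eq_3)

lemma wb_y: "y = [] \<or> y = [0] \<Longrightarrow> tape_write (tape_read (y, 0)) (y, 0) = ([0], 0)"
  by (auto simp: tape_read_def tape_write_def)

lemma I0_step:
  assumes "I0 \<phi> a k c" "k < length a"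
  shows "I0 \<phi> a (Suc k) (otm_step M0 \<phi> (otm_step M0 \<phi> c))"
proof -
  obtain x y where c: "c = (0, [(map enc a, k), (x, 0), (y, 0)])" and g: "good x ((\<phi> ^^ k) [])"
    and y: "y = [] \<or> y = [0]"
    using assms(1) unfolding I0_def by blast
  have r0: "tape_read (map enc a, k) = enc (a ! k)" using assms(2) by (simp add: tape_read_def)
  have ne: "enc (a!k) \<noteq> 0" by (simp add: enc_def)
  have w0: "tape_write (enc (a!k)) (map enc a, k) = (map enc a, k)"
    using assms(2) by (simp add: tape_write_def) (metis list_update_id nth_map)
  obtain x' where x': "tape_write (tape_read (x, 0)) (x, 0) = (x', 0)"
    by (metis tw0)
  have g': "good x' ((\<phi> ^^ k) [])" using good_wb[OF g] x' by simp
  have s1: "otm_step M0 \<phi> c = (1, [(map enc a, Suc k), (x', 0), ([0], 0)])"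
    using c r0 ne w0 x' wb_y[OF y]
    by (simp add: otm_step_def d0_def Let_def tape_move_def)
  have s2: "otm_step M0 \<phi> (otm_step M0 \<phi> c) = (0, [(map enc a, Suc k), (map enc (\<phi> ((\<phi> ^^ k) [])), 0), ([0], 0)])"
    using s1 good_content[OF g'] by (simp add: otm_step_def Let_def)
  show ?thesis unfolding s2 I0_def good_def by simp
qed

lemma I0_run: "k \<le> length a \<Longrightarrow> I0 \<phi> a k (otm_run M0 \<phi> a (2 * k))"
proof (induction k)
  case 0 then show ?case using I0_init by simp
next
  case (Suc k)
  then have "I0 \<phi> a (Suc k) (otm_step M0 \<phi> (otm_step M0 \<phi> (otm_run M0 \<phi> a (2 * k))))"
    by (intro I0_step) auto
  then show ?case by (simp add: run_Suc)
qed

lemma M0_final: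
  "halted M0 (otm_run M0 \<phi> a (2 * length a + 2)) \<and>
   tape_content (snd (otm_run M0 \<phi> a (2 * length a + 2)) ! 2) = F0 \<phi> a"
proof -
  let ?k = "length a"
  obtain x y where c: "otm_run M0 \<phi> a (2 * ?k) = (0, [(map enc a, ?k), (x, 0), (y, 0)])"
    and g: "good x ((\<phi> ^^ ?k) [])" and y: "y = [] \<or> y = [0]"
    using I0_run[of ?k a \<phi>] unfolding I0_def by blast
  have r0: "tape_read (map enc a, ?k) = 0" by (simp add: tape_read_def)
  obtain t0 where t0: "tape_write 0 (map enc a, ?k) = t0" by simp
  obtain x' where x': "tape_write (tape_read (x, 0)) (x, 0) = (x', 0)"
    by (metis tw0)
  have g': "good x' ((\<phi> ^^ ?k) [])" using good_wb[OF g] x' by simp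
  have s1: "otm_run M0 \<phi> a (Suc (2 * ?k)) = (2, [t0, (x', 0), ([0], 0)])"
    unfolding run_Suc c using r0 x' t0 wb_y[OF y] by (simp add: otm_step_def d0_def Let_def)
  have xne: "x' \<noteq> []" using tw_ne[of "tape_read (x, 0)" "(x, 0)"] x' by simp
  let ?s = "tape_read (x', 0)"
  have s2: "otm_run M0 \<phi> a (Suc (Suc (2 * ?k))) = (3, [tape_write (tape_read t0) t0, (x', 0), ([?s], 0)])"
    unfolding run_Suc[of _ _ _ "Suc (2 * ?k)"] s1 using xne by (simp add: otm_step_def d0_def Let_def tape_write_def tape_read_def)
  have "tape_content ([?s], 0) = F0 \<phi> a"
    using good_read[OF g'] by (cases "(\<phi> ^^ ?k) []") (auto simp: tape_content_def F0_def enc_def)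
  then show ?thesis using s2 by (simp add: halted_def)
qed

lemma poly_F0: "poly_time_computable F0"
proof -
  have "computes M0 F0" unfolding computes_def using wf_M0 M0_final by blast
  moreover have "(\<lambda>l n. poly [:2, 2:] n) \<in> second_order_poly" by (rule sop_poly)
  moreover have "otm_time M0 \<phi> a \<le> enat (poly [:2, 2:] (length a))" for \<phi> a
  proof -
    have h: "halted M0 (otm_run M0 \<phi> a (2 * length a + 2))" using M0_final by blast
    then have "(LEAST n. halted M0 (otm_run M0 \<phi> a n)) \<le> 2 * length a + 2" by (rule Least_le)
    then show ?thesis using h by (auto simp: otm_time_def)
  qed
  ultimately show ?thesis unfolding poly_time_computable_def by blast
qed



definition cinv :: "otm \<Rightarrow> config \<Rightarrow> bool" where
  "cinv M c \<longleftrightarrow> fst c < nstates M \<and> length (snd c) = ntapes M \<and>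
     (\<forall>t\<in>set (snd c). set (fst t) \<subseteq> {..<nsyms M})"

lemma cinv_init: "wf_otm M \<Longrightarrow> cinv M (init_config M a)"
  by (auto simp: cinv_def wf_otm_def init_config_def enc_def)

lemma tw_set: "set (fst (tape_write s t)) \<subseteq> insert 0 (insert s (set (fst t)))"
  using set_update_subset_insert[of "fst t" "snd t" s] by (auto simp: tape_write_def)

lemma step_normal:
  assumes wf: "wf_otm M" and ci: "cinv M c" and nh: "fst c \<noteq> q_halt M" and nq: "fst c \<noteq> q_query M"
  shows "\<exists>q' ws ds. delta M (fst c) (map tape_read (snd c)) = (q', ws, ds) \<and> q' < nstates M \<and>
     length ws = ntapes M \<and> set ws \<subseteq> {..<nsyms M} \<and> length ds = ntapes M \<and> set ds \<subseteq> {-1, 0, 1} \<and>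
     otm_step M \<phi> c = (q', map (\<lambda>((t, w), d). tape_move d (tape_write w t)) (zip (zip (snd c) ws) ds))"
proof -
  have rs: "length (map tape_read (snd c)) = ntapes M" "set (map tape_read (snd c)) \<subseteq> {..<nsyms M}"
  proof -
    show "length (map tape_read (snd c)) = ntapes M" using ci by (simp add: cinv_def)
    have "tape_read t < nsyms M" if "t \<in> set (snd c)" for t
      using ci that wf unfolding cinv_def wf_otm_def tape_read_def by (auto simp: subset_iff)
    then show "set (map tape_read (snd c)) \<subseteq> {..<nsyms M}" by auto
  qed
  have fq: "fst c < nstates M" using ci by (simp add: cinv_def)
  obtain q' ws ds where d: "delta M (fst c) (map tape_read (snd c)) = (q', ws, ds)"
    by (metis prod.collapse)
  have "q' < nstates M \<and> length ws = ntapes M \<and> set ws \<subseteq> {..<nsyms M} \<and> length ds = ntapes M \<and> set ds \<subseteq> {-1, 0, 1}"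
    using wf fq rs d unfolding wf_otm_def by fastforce
  moreover have "otm_step M \<phi> c = (q', map (\<lambda>((t, w), d). tape_move d (tape_write w t)) (zip (zip (snd c) ws) ds))"
    using nh nq d by (simp add: otm_step_def Let_def)
  ultimately show ?thesis using d by blast
qed

lemma cinv_step:
  assumes wf: "wf_otm M" and ci: "cinv M c"
  shows "cinv M (otm_step M \<phi> c)"
proof (cases "fst c = q_halt M")
  case True then show ?thesis using ci by (simp add: step_halted halted_def)
next
  case nh: False
  show ?thesis
  proof (cases "fst c = q_query M")
    case True
    have st0: "otm_step M \<phi> c = (q_answer M, (snd c)[1 := (map enc (\<phi> (tape_content (snd c ! 1))), 0)])"
      using nh True by (simp add: otm_step_def Let_def)
    have enc_lt: "enc x < nsyms M" for x
      using wf by (auto simp: wf_otm_def enc_def)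
    then have "set (map enc b) \<subseteq> {..<nsyms M}" for b by auto
    moreover note this
    moreover have "q_answer M < nstates M" using wf by (simp add: wf_otm_def)
    moreover have "\<forall>t\<in>set ((snd c)[1 := (map enc b, 0)]). set (fst t) \<subseteq> {..<nsyms M}" for b
    proof
      fix t assume "t \<in> set ((snd c)[1 := (map enc b, 0)])"
      then have "t \<in> insert (map enc b, 0) (set (snd c))" using set_update_subset_insert by fast
      then show "set (fst t) \<subseteq> {..<nsyms M}" using ci enc_lt
        unfolding cinv_def by auto
    qed
    ultimately show ?thesis using ci st0 unfolding cinv_def by simp
  next
    case nq: False
    from step_normal[OF wf ci nh nq, of \<phi>] obtain q' ws ds where
      h: "q' < nstates M" "length ws = ntapes M" "set ws \<subseteq> {..<nsyms M}" "length ds = ntapes M"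
      and st: "otm_step M \<phi> c = (q', map (\<lambda>((t, w), d). tape_move d (tape_write w t)) (zip (zip (snd c) ws) ds))"
      by blast
    have n0: "0 < nsyms M" using wf by (simp add: wf_otm_def)
    have "set (fst (tape_move d (tape_write w t))) \<subseteq> {..<nsyms M}"
      if "((t, w), d) \<in> set (zip (zip (snd c) ws) ds)" for t w d
    proof -
      have "t \<in> set (snd c)" "w \<in> set ws" using that by (auto dest: set_zip_leftD set_zip_rightD)
      then show ?thesis using tw_set[of w t] ci h n0 unfolding cinv_def tape_move_def by fastforce
    qed
    then have pp: "set (fst ((\<lambda>((t, w), d). tape_move d (tape_write w t)) p)) \<subseteq> {..<nsyms M}"
      if "p \<in> set (zip (zip (snd c) ws) ds)" for p
      using that by (metis (no_types, lifting) case_prod_conv prod.collapse)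
    have len: "length (map (\<lambda>((t, w), d). tape_move d (tape_write w t)) (zip (zip (snd c) ws) ds)) = ntapes M"
      using h ci by (simp add: cinv_def)
    show ?thesis unfolding cinv_def st using h(1) len pp by auto
  qed
qed

lemma cinv_run: "wf_otm M \<Longrightarrow> cinv M (otm_run M \<phi> a n)"
  by (induction n) (simp_all add: run_0 run_Suc cinv_init cinv_step)

lemma step_agree:
  "(fst c = q_query M \<Longrightarrow> \<phi> (tape_content (snd c ! 1)) = \<psi> (tape_content (snd c ! 1))) \<Longrightarrow>
   otm_step M \<phi> c = otm_step M \<psi> c"
  by (simp add: otm_step_def Let_def)

lemma run_agree:
  assumes "\<And>s. s < n \<Longrightarrow> fst (otm_run M \<phi> a s) = q_query M \<Longrightarrow>
     \<phi> (tape_content (snd (otm_run M \<phi> a s) ! 1)) = \<psi> (tape_content (snd (otm_run M \<phi> a s) ! 1))"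
  shows "s \<le> n \<Longrightarrow> otm_run M \<psi> a s = otm_run M \<phi> a s"
proof (induction s)
  case 0 then show ?case by (simp add: run_0)
next
  case (Suc s)
  then have eq: "otm_run M \<psi> a s = otm_run M \<phi> a s" by simp
  have "otm_step M \<phi> (otm_run M \<phi> a s) = otm_step M \<psi> (otm_run M \<phi> a s)"
    by (rule step_agree) (use assms[of s] Suc.prems in simp)
  then show ?case using eq by (simp add: run_Suc)
qed

lemma lr_agree:
  assumes "\<And>s. s \<le> n \<Longrightarrow> otm_run M \<psi> a s = otm_run M \<phi> a s"
  shows "m \<le> n \<Longrightarrow> length_rev M \<psi> a m = length_rev M \<phi> a m"
proof (induction m)
  case 0 then show ?case by simp
next
  case (Suc m) then show ?case using assms[of "Suc m"] by simp
qed

lemma lr_mono: "m \<le> n \<Longrightarrow> length_rev M \<phi> a m \<le> length_rev M \<phi> a n"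
  by (induction n) (auto simp: le_Suc_eq le_max_iff_disj)

lemma content_le_lr:
  assumes "wf_otm M"
  shows "length (tape_content (snd (otm_run M \<phi> a n) ! 1)) \<le> length_rev M \<phi> a n"
proof (cases n)
  case 0
  have "ntapes M - 1 > 0" using assms by (simp add: wf_otm_def)
  then have "snd (init_config M a) ! 1 = ([], 0)"
    by (simp add: init_config_def)
  then show ?thesis using 0 by (simp add: run_0 tape_content_def)
qed simp



fun chainmap :: "nat list \<Rightarrow> bstr \<Rightarrow> bstr" where
  "chainmap (l1 # l2 # ls) x = (if x = replicate l1 True then replicate l2 True else chainmap (l2 # ls) x)"
| "chainmap _ x = x"

lemma rep_eq_iff: "replicate m True = replicate n True \<longleftrightarrow> m = n"
  by (metis length_replicate)

lemma cm1: "sorted_wrt (<) ls \<Longrightarrow> Suc k < length ls \<Longrightarrow>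
  chainmap ls (replicate (ls!k) True) = replicate (ls!Suc k) True"
proof (induction ls arbitrary: k)
  case Nil then show ?case by simp
next
  case (Cons l1 rest)
  then obtain l2 ls where rest: "rest = l2 # ls" by (cases rest) auto
  show ?case
  proof (cases k)
    case 0 then show ?thesis by (simp add: rest)
  next
    case (Suc k')
    have "k' < length rest" using Cons.prems Suc by simp
    then have "rest ! k' \<in> set rest" by (rule nth_mem)
    then have "l1 < rest ! k'" using Cons.prems(1) by auto
    then have nq: "replicate (rest ! k') True \<noteq> replicate l1 True" by (simp add: rep_eq_iff)
    have ih: "chainmap rest (replicate (rest ! k') True) = replicate (rest ! Suc k') True"
      using Cons.IH[of k'] Cons.prems Suc by simp
    have cm: "chainmap (l1 # rest) y = (if y = replicate l1 True then replicate l2 True else chainmap rest y)" for y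
      unfolding rest by simp
    have e1: "(l1 # rest) ! k = rest ! k'" "(l1 # rest) ! Suc k = rest ! Suc k'" using Suc by simp_all
    show ?thesis unfolding e1 cm if_not_P[OF nq] by (rule ih)
  qed
qed

lemma cm2: "(\<And>k. Suc k < length ls \<Longrightarrow> x \<noteq> replicate (ls!k) True) \<Longrightarrow> chainmap ls x = x"
proof (induction ls x rule: chainmap.induct)
  case (1 l1 l2 ls x)
  have "x \<noteq> replicate l1 True" using 1(2)[of 0] by simp
  moreover have "chainmap (l2 # ls) x = x"
  proof (rule 1(1))
    show "x \<noteq> replicate l1 True" by fact
    fix k assume "Suc k < length (l2 # ls)"
    then show "x \<noteq> replicate ((l2 # ls) ! k) True" using 1(2)[of "Suc k"] by simp
  qed
  ultimately show ?case by simp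
qed auto

lemma strict_chain: "(\<And>k. k < N \<Longrightarrow> (v::nat \<Rightarrow> nat) k < v (Suc k)) \<Longrightarrow> k < k' \<Longrightarrow> k' \<le> N \<Longrightarrow> v k < v k'"
proof (induction k')
  case 0 then show ?case by simp
next
  case (Suc k')
  have s: "v k' < v (Suc k')" using Suc.prems(1)[of k'] Suc.prems(3) by simp
  show ?case
  proof (cases "k = k'")
    case True then show ?thesis using s by simp
  next
    case False
    then have "v k < v k'" using Suc.IH Suc.prems by simp
    then show ?thesis using s by simp
  qed
qed

locale adv =
  fixes M :: otm and N :: nat
  assumes comp: "computes M F0"
    and fin: "\<And>\<phi> a. finite (range (length_rev M \<phi> a)) \<and> card (range (length_rev M \<phi> a)) \<le> N"
begin

lemma wf: "wf_otm M" using comp unfolding computes_def by blast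

definition a0 :: bstr where "a0 = replicate (Suc N) False"

definition isq :: "bfun \<Rightarrow> nat \<Rightarrow> bstr \<Rightarrow> bool" where
  "isq \<phi> s x \<longleftrightarrow> fst (otm_run M \<phi> a0 s) = q_query M \<and> tape_content (snd (otm_run M \<phi> a0 s) ! 1) = x"

definition Tq :: "nat list \<Rightarrow> nat" where
  "Tq ls = (LEAST s. isq (chainmap ls) s (replicate (last ls) True))"

definition nxt :: "nat list \<Rightarrow> nat" where
  "nxt ls = Suc (max (last ls) (length_rev M (chainmap ls) a0 (Tq ls)))"

primrec Ls :: "nat \<Rightarrow> nat list" where
  "Ls 0 = [0]"
| "Ls (Suc i) = Ls i @ [nxt (Ls i)]"

lemma len_Ls[simp]: "length (Ls i) = Suc i"
  by (induction i) auto

lemma Ls_nth: "k \<le> i \<Longrightarrow> Ls i ! k = Ls k ! k"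
proof (induction i)
  case 0 then show ?case by simp
next
  case (Suc i)
  show ?case
  proof (cases "k = Suc i")
    case False
    then have "k \<le> i" using Suc.prems by simp
    then show ?thesis using Suc.IH by (simp add: nth_append)
  qed simp
qed

definition L :: "nat \<Rightarrow> nat" where "L k = Ls k ! k"

lemma last_Ls: "last (Ls i) = L i"
proof -
  have "length (Ls i) \<noteq> 0" by simp
  then have "Ls i \<noteq> []" by (rule contrapos_nn) simp
  then show ?thesis by (simp add: L_def last_conv_nth)
qed

lemma L0: "L 0 = 0" by (simp add: L_def)

lemma L_Suc: "L (Suc i) = nxt (Ls i)"
  by (simp add: L_def nth_append)

lemma L_less: "L i < L (Suc i)"
  by (simp add: L_Suc nxt_def last_Ls)

lemma L_mono: "strict_mono L"
  unfolding strict_mono_Suc_iff using L_less by blast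

lemma Ls_L: "k \<le> i \<Longrightarrow> Ls i ! k = L k"
  unfolding L_def by (rule Ls_nth)

lemma Ls_sorted: "sorted_wrt (<) (Ls i)"
  unfolding sorted_wrt_iff_nth_less
proof (intro allI impI)
  fix k k' assume "k < k'" "k' < length (Ls i)"
  then show "Ls i ! k < Ls i ! k'" using Ls_L[of k i] Ls_L[of k' i] strict_monoD[OF L_mono, of k k'] by simp
qed

definition c :: "nat \<Rightarrow> bstr" where "c k = replicate (L k) True"
definition ph :: "nat \<Rightarrow> bfun" where "ph i = chainmap (Ls i)"
definition T :: "nat \<Rightarrow> nat" where "T i = Tq (Ls i)"

lemma T_def': "T i = (LEAST s. isq (ph i) s (c i))"
  by (simp add: T_def Tq_def ph_def c_def last_Ls)

lemma L_Suc': "L (Suc i) = Suc (max (L i) (length_rev M (ph i) a0 (T i)))"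
  by (simp add: L_Suc nxt_def last_Ls ph_def T_def)

lemma c0: "c 0 = []" by (simp add: c_def L0)

lemma c_inj: "c k = c k' \<longleftrightarrow> k = k'"
  using L_mono by (auto simp: c_def rep_eq_iff strict_mono_eq)

lemma len_c: "length (c k) = L k" by (simp add: c_def)

lemma phi_chain: "k < i \<Longrightarrow> ph i (c k) = c (Suc k)"
  using cm1[OF Ls_sorted, of k i] by (simp add: ph_def c_def Ls_L)

lemma phi_fix: "(\<And>k. k < i \<Longrightarrow> x \<noteq> c k) \<Longrightarrow> ph i x = x"
  unfolding ph_def by (rule cm2) (simp add: Ls_L c_def)

lemma False_not_c: "[False] \<noteq> c k"
  by (cases "L k") (auto simp: c_def)

lemma iter_phi: "(ph i ^^ n) [] = c (min n i)"
proof (induction n)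
  case 0 then show ?case by (simp add: c0)
next
  case (Suc n)
  show ?case
  proof (cases "n < i")
    case True then show ?thesis using Suc phi_chain by simp
  next
    case False
    then have "ph i (c i) = c i" by (intro phi_fix) (simp add: c_inj)
    then show ?thesis using Suc False by simp
  qed
qed

definition ps :: "nat \<Rightarrow> bfun" where "ps i = (ph i)(c i := [False])"

lemma ps_ci: "ps i (c i) = [False]" by (simp add: ps_def)
lemma ps_other: "x \<noteq> c i \<Longrightarrow> ps i x = ph i x" by (simp add: ps_def)

lemma iter_psi: "n \<le> i \<Longrightarrow> (ps i ^^ n) [] = c n"
proof (induction n)
  case 0 then show ?case by (simp add: c0)
next
  case (Suc n)
  then have "(ps i ^^ n) [] = c n" by simp
  moreover have "ps i (c n) = c (Suc n)" using Suc.prems phi_chain[of n i] ps_other[of "c n" i]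
    by (simp add: c_inj)
  ultimately show ?case by simp
qed

lemma iter_psi2: "(ps i ^^ (Suc i + m)) [] = [False]"
proof (induction m)
  case 0
  have "(ps i ^^ i) [] = c i" by (rule iter_psi) simp
  moreover have "(ps i ^^ (Suc i + 0)) [] = ps i ((ps i ^^ i) [])"
    by (simp only: add_0_right funpow.simps(2) comp_apply)
  ultimately show ?case using ps_ci by simp
next
  case (Suc m)
  have "ps i [False] = [False]" using ps_other[OF False_not_c, of i] phi_fix[OF False_not_c] by simp
  moreover have "(ps i ^^ (Suc i + Suc m)) [] = ps i ((ps i ^^ (Suc i + m)) [])"
    by (simp only: add_Suc_right funpow.simps(2) comp_apply)
  ultimately show ?case using Suc.IH by simp
qed

lemma query_exists: assumes "i \<le> N" shows "\<exists>s. isq (ph i) s (c i)"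
proof (rule ccontr)
  assume nq: "\<not> ?thesis"
  let ?\<psi> = "ps i"
  have agree: "otm_run M ?\<psi> a0 s = otm_run M (ph i) a0 s" for s
    by (rule run_agree[of s]) (use nq in \<open>auto simp: isq_def ps_other\<close>)
  obtain n1 where n1: "halted M (otm_run M (ph i) a0 n1)"
    "tape_content (snd (otm_run M (ph i) a0 n1) ! 2) = F0 (ph i) a0"
    using comp unfolding computes_def by blast
  obtain n2 where n2: "halted M (otm_run M ?\<psi> a0 n2)"
    "tape_content (snd (otm_run M ?\<psi> a0 n2) ! 2) = F0 ?\<psi> a0"
    using comp unfolding computes_def by blast
  let ?m = "max n1 n2"
  have "otm_run M (ph i) a0 ?m = otm_run M (ph i) a0 n1" by (rule halted_stay'[OF n1(1)]) simp
  moreover have "otm_run M ?\<psi> a0 ?m = otm_run M ?\<psi> a0 n2" by (rule halted_stay'[OF n2(1)]) simp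
  ultimately have "F0 (ph i) a0 = F0 ?\<psi> a0" using n1(2) n2(2) agree by metis
  moreover have "F0 (ph i) a0 = take 1 (c i)"
  proof -
    have "length a0 = Suc N" by (simp add: a0_def)
    then show ?thesis unfolding F0_def iter_phi using assms by simp
  qed
  moreover have "F0 ?\<psi> a0 = [False]"
  proof -
    have "length a0 = Suc i + (N - i)" using assms by (simp add: a0_def)
    then show ?thesis unfolding F0_def by (simp only: iter_psi2) simp
  qed
  moreover have "take 1 (c i) \<noteq> [False]" by (cases "L i") (auto simp: c_def)
  ultimately show False by simp
qed

lemma T_isq: "i \<le> N \<Longrightarrow> isq (ph i) (T i) (c i)"
  unfolding T_def' by (rule LeastI_ex) (rule query_exists)

lemma T_min: "s < T i \<Longrightarrow> \<not> isq (ph i) s (c i)"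
  unfolding T_def' by (rule not_less_Least)

lemma T_bound: "length_rev M (ph i) a0 (T i) < L (Suc i)"
  using L_Suc' by simp

lemma agr: assumes "i \<le> j" "s \<le> T i"
  shows "otm_run M (ph j) a0 s = otm_run M (ph i) a0 s"
proof (rule run_agree[OF _ assms(2)])
  fix s assume s: "s < T i" and q: "fst (otm_run M (ph i) a0 s) = q_query M"
  let ?x = "tape_content (snd (otm_run M (ph i) a0 s) ! 1)"
  have ni: "?x \<noteq> c i" using T_min[OF s] q by (simp add: isq_def)
  have "length ?x \<le> length_rev M (ph i) a0 s" by (rule content_le_lr[OF wf])
  also have "\<dots> \<le> length_rev M (ph i) a0 (T i)" using s by (simp add: lr_mono)
  also have "\<dots> < L (Suc i)" by (rule T_bound)
  finally have lx: "length ?x < L (Suc i)" .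
  have nk: "?x \<noteq> c k" if "i \<le> k" for k
  proof (cases "k = i")
    case False
    then have "Suc i \<le> k" using that by simp
    then have "L (Suc i) \<le> L k" using L_mono by (simp add: strict_mono_less_eq)
    then show ?thesis using lx len_c[of k] by auto
  qed (use ni in simp)
  show "ph i ?x = ph j ?x"
  proof (cases "\<exists>k<i. ?x = c k")
    case True
    then obtain k where "k < i" "?x = c k" by blast
    then show ?thesis using phi_chain[of k i] phi_chain[of k j] assms(1) by simp
  next
    case False
    have "ph i ?x = ?x" by (rule phi_fix) (use False in blast)
    moreover have "ph j ?x = ?x"
    proof (rule phi_fix)
      fix k assume "k < j"
      show "?x \<noteq> c k"
      proof (cases "k < i")
        case True then show ?thesis using False by blast
      next
        case nl: False then show ?thesis using nk[of k] by simp
      qed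
    qed
    ultimately show ?thesis by simp
  qed
qed

lemma lr_agr: "i \<le> j \<Longrightarrow> s \<le> T i \<Longrightarrow> length_rev M (ph j) a0 s = length_rev M (ph i) a0 s"
  by (rule lr_agree[of "T i"]) (auto intro: agr)

lemma jump: assumes "i < j" "i \<le> N"
  shows "L (Suc i) \<le> length_rev M (ph j) a0 (Suc (T i))"
proof -
  let ?c0 = "otm_run M (ph i) a0 (T i)"
  have q: "fst ?c0 = q_query M" and ct: "tape_content (snd ?c0 ! 1) = c i"
    using T_isq[OF assms(2)] by (auto simp: isq_def)
  have nh: "q_query M \<noteq> q_halt M" using wf by (simp add: wf_otm_def)
  have len: "1 < length (snd ?c0)" using cinv_run[OF wf, of "ph i" a0 "T i"] wf
    by (simp add: cinv_def wf_otm_def)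
  have "otm_run M (ph j) a0 (Suc (T i)) = otm_step M (ph j) ?c0"
    using agr[of i j "T i"] assms by (simp add: run_Suc)
  also have "\<dots> = (q_answer M, (snd ?c0)[1 := (map enc (ph j (c i)), 0)])"
    using q nh ct by (simp add: otm_step_def Let_def)
  finally have "tape_content (snd (otm_run M (ph j) a0 (Suc (T i))) ! 1) = c (Suc i)"
    using len phi_chain[OF assms(1)] by simp
  then show ?thesis by (simp add: len_c)
qed

lemma T_order: assumes "Suc i \<le> N" shows "T i < T (Suc i)"
proof (rule ccontr)
  assume "\<not> ?thesis"
  then have le: "T (Suc i) \<le> T i" by simp
  have "isq (ph (Suc i)) (T (Suc i)) (c (Suc i))" by (rule T_isq[OF assms])
  then have "tape_content (snd (otm_run M (ph i) a0 (T (Suc i))) ! 1) = c (Suc i)"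
    using agr[of i "Suc i" "T (Suc i)"] le by (simp add: isq_def)
  then have "L (Suc i) \<le> length_rev M (ph i) a0 (T (Suc i))"
    using content_le_lr[OF wf, of "ph i" a0 "T (Suc i)"] by (simp add: len_c)
  also have "\<dots> \<le> length_rev M (ph i) a0 (T i)" using le by (simp add: lr_mono)
  also have "\<dots> < L (Suc i)" by (rule T_bound)
  finally show False by simp
qed

lemma contradiction: False
proof -
  define j where "j = Suc N"
  define v where "v k = length_rev M (ph j) a0 (Suc (T k))" for k
  have step: "v k < v (Suc k)" if "k < N" for k
  proof -
    have "v k \<le> length_rev M (ph j) a0 (T (Suc k))"
      unfolding v_def using T_order[of k] that by (intro lr_mono) simp
    also have "\<dots> = length_rev M (ph (Suc k)) a0 (T (Suc k))"
      using that by (intro lr_agr) (simp_all add: j_def)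
    also have "\<dots> < L (Suc (Suc k))" by (rule T_bound)
    also have "\<dots> \<le> v (Suc k)" unfolding v_def using that by (intro jump) (simp_all add: j_def)
    finally show ?thesis .
  qed
  have "inj_on v {..N}"
  proof (rule inj_onI)
    fix x y assume "x \<in> {..N}" "y \<in> {..N}" "v x = v y"
    then show "x = y" using strict_chain[of N v, OF step] by (metis atMost_iff less_irrefl nat_neq_iff)
  qed
  then have "card (v ` {..N}) = Suc N" by (simp add: card_image)
  moreover have "v ` {..N} \<subseteq> range (length_rev M (ph j) a0)" unfolding v_def by (auto simp del: length_rev.simps)
  ultimately have "Suc N \<le> card (range (length_rev M (ph j) a0))"
    using fin by (metis card_mono)
  then show False using fin[of "ph j" a0] by simp
qed

end

lemma not_finrev: "\<not> (\<exists>M. computes M F0 \<and> finite_length_revision M)"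
proof
  assume "\<exists>M. computes M F0 \<and> finite_length_revision M"
  then obtain M N where "computes M F0" and
    "\<forall>\<phi> a. finite (range (length_rev M \<phi> a)) \<and> card (range (length_rev M \<phi> a)) \<le> N"
    unfolding finite_length_revision_def by blast
  then interpret adv M N by unfold_locales blast+
  show False by (rule contradiction)
qed



lemma fin_strs: "finite {a :: bstr. length a \<le> n}"
proof -
  have "{a :: bstr. length a \<le> n} = {xs. set xs \<subseteq> UNIV \<and> length xs \<le> n}" by simp
  then show ?thesis using finite_lists_length_le[of "UNIV :: bool set" n] by simp
qed

lemma size_fn_ge: "length (\<phi> b) \<le> size_fn \<phi> (length b)"
  unfolding size_fn_def by (rule Max_ge) (use fin_strs in auto)

lemma size_fn_mono: "m \<le> n \<Longrightarrow> size_fn \<phi> m \<le> size_fn \<phi> n"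
  unfolding size_fn_def
proof (rule Max_mono)
  have "([]::bstr) \<in> {a. length a \<le> m}" by simp
  then show "(\<lambda>a. length (\<phi> a)) ` {a. length a \<le> m} \<noteq> {}" by blast
qed (use fin_strs in auto)

lemma poly_mono_nat: "(x::nat) \<le> y \<Longrightarrow> poly p x \<le> poly p y"
proof (induction p rule: pCons_induct)
  case 0 then show ?case by simp
next
  case (pCons a p)
  then have "x * poly p x \<le> y * poly p y" by (intro mult_mono) simp_all
  then show ?case by simp
qed

lemma content_le_len: "length (tape_content t) \<le> length (fst t)"
  unfolding tape_content_def using length_takeWhile_le by (simp add: length_takeWhile_le)

lemma tw_len: "length (fst (tape_write w t)) \<le> max (length (fst t)) (Suc (snd t))"
  by (simp add: tape_write_def)

lemma tw_snd: "snd (tape_write w t) = snd t"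
  by (simp add: tape_write_def)

lemma tm_snd: "d \<in> {-1, 0, 1} \<Longrightarrow> snd (tape_move d t) \<le> Suc (snd t)"
  by (auto simp: tape_move_def)

lemma tm_fst: "fst (tape_move d t) = fst t"
  by (simp add: tape_move_def)

lemma normal_tape1:
  assumes wf: "wf_otm M" and ci: "cinv M c" and nh: "fst c \<noteq> q_halt M" and nq: "fst c \<noteq> q_query M"
  shows "length (fst (snd (otm_step M \<phi> c) ! 1)) \<le> max (length (fst (snd c ! 1))) (Suc (snd (snd c ! 1)))
       \<and> snd (snd (otm_step M \<phi> c) ! 1) \<le> Suc (snd (snd c ! 1))"
proof -
  obtain q' ws ds where h: "length ws = ntapes M" "length ds = ntapes M" "set ds \<subseteq> {-1, 0, 1}"
    and st: "otm_step M \<phi> c = (q', map (\<lambda>((t, w), d). tape_move d (tape_write w t)) (zip (zip (snd c) ws) ds))"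
    using step_normal[OF wf ci nh nq, of \<phi>] by blast
  have l: "1 < ntapes M" "length (snd c) = ntapes M" using wf ci by (auto simp: wf_otm_def cinv_def)
  have t1: "snd (otm_step M \<phi> c) ! 1 = tape_move (ds ! 1) (tape_write (ws ! 1) (snd c ! 1))"
    using st h l by simp
  have "ds ! 1 \<in> set ds" using h(2) l(1) by (simp add: nth_mem)
  then have d: "ds ! 1 \<in> {-1, 0, 1}" using h(3) by blast
  show ?thesis unfolding t1
    using tw_len[of "ws!1" "snd c ! 1"] tm_snd[OF d, of "tape_write (ws ! 1) (snd c ! 1)"]
    by (simp add: tm_fst tw_snd)
qed

lemma aux1: "(x::nat) \<le> max A n \<and> s \<le> n \<Longrightarrow> A \<le> B \<Longrightarrow> x \<le> max B (Suc n) \<and> s \<le> Suc n"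
  by (auto simp: le_max_iff_disj)

lemma aux2: "(x::nat) \<le> max y (Suc s) \<and> s' \<le> Suc s \<Longrightarrow> y \<le> max A n \<and> s \<le> n \<Longrightarrow> A \<le> B \<Longrightarrow> x \<le> max B (Suc n) \<and> s' \<le> Suc n"
  by (auto simp: le_max_iff_disj)

locale strong =
  fixes M :: otm and p :: "nat poly" and \<phi> :: bfun and a :: bstr
  assumes wf: "wf_otm M"
    and sc: "is_step_count M (\<lambda>n. poly p n)"
begin

abbreviation "lr \<equiv> length_rev M \<phi> a"
abbreviation "tp n \<equiv> snd (otm_run M \<phi> a n) ! 1"

lemma cinv': "cinv M (otm_run M \<phi> a n)" by (rule cinv_run[OF wf])

lemma tape1_inv: "length (fst (tp n)) \<le> max (lr n) n \<and> snd (tp n) \<le> n"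
proof (induction n)
  case 0
  have "ntapes M - 1 > 0" using wf by (simp add: wf_otm_def)
  then have "snd (init_config M a) ! 1 = ([], 0)" by (simp add: init_config_def)
  then show ?case by (simp add: run_0)
next
  case (Suc n)
  let ?c = "otm_run M \<phi> a n"
  have mono: "lr n \<le> lr (Suc n)" by simp
  show ?case
  proof (cases "fst ?c = q_halt M")
    case True
    then have "otm_run M \<phi> a (Suc n) = ?c" by (simp add: run_Suc step_halted halted_def)
    then have e: "tp (Suc n) = tp n" by simp
    show ?thesis unfolding e using Suc.IH mono aux1 by blast
  next
    case nh: False
    show ?thesis
    proof (cases "fst ?c = q_query M")
      case True
      have len: "1 < length (snd ?c)" using cinv'[of n] wf by (simp add: cinv_def wf_otm_def)
      let ?b = "\<phi> (tape_content (snd ?c ! 1))"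
      have "otm_run M \<phi> a (Suc n) = (q_answer M, (snd ?c)[1 := (map enc ?b, 0)])"
        using nh True by (simp add: run_Suc otm_step_def Let_def)
      then have t: "tp (Suc n) = (map enc ?b, 0)" using len by simp
      have "length (tape_content (tp (Suc n))) \<le> lr (Suc n)" by simp
      then have "length ?b \<le> lr (Suc n)" unfolding t by simp
      then show ?thesis unfolding t by simp
    next
      case nq: False
      have "length (fst (tp (Suc n))) \<le> max (length (fst (tp n))) (Suc (snd (tp n)))
          \<and> snd (tp (Suc n)) \<le> Suc (snd (tp n))"
        using normal_tape1[OF wf cinv' nh nq, of \<phi>] by (simp add: run_Suc)
      then show ?thesis using Suc.IH mono aux2 by blast
    qed
  qed
qed

lemma jump_bound: "lr (Suc n) \<le> lr n + Suc n + size_fn \<phi> (lr n)"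
proof -
  let ?c = "otm_run M \<phi> a n"
  have "length (tape_content (tp (Suc n))) \<le> lr n + Suc n + size_fn \<phi> (lr n)"
  proof (cases "fst ?c = q_halt M")
    case True
    then have "otm_run M \<phi> a (Suc n) = ?c" by (simp add: run_Suc step_halted halted_def)
    then show ?thesis using content_le_lr[OF wf, of \<phi> a n] by simp
  next
    case nh: False
    show ?thesis
    proof (cases "fst ?c = q_query M")
      case True
      have len: "1 < length (snd ?c)" using cinv'[of n] wf by (simp add: cinv_def wf_otm_def)
      let ?x = "tape_content (snd ?c ! 1)"
      have "otm_run M \<phi> a (Suc n) = (q_answer M, (snd ?c)[1 := (map enc (\<phi> ?x), 0)])"
        using nh True by (simp add: run_Suc otm_step_def Let_def)
      then have "tape_content (tp (Suc n)) = \<phi> ?x" using len by simp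
      moreover have "length (\<phi> ?x) \<le> size_fn \<phi> (lr n)"
        by (rule le_trans[OF size_fn_ge size_fn_mono[OF content_le_lr[OF wf, of \<phi> a n], of \<phi>]])
      ultimately show ?thesis by simp
    next
      case nq: False
      have "length (fst (tp (Suc n))) \<le> max (length (fst (tp n))) (Suc (snd (tp n)))"
        using normal_tape1[OF wf cinv' nh nq, of \<phi>] by (simp add: run_Suc)
      then have "length (fst (tp (Suc n))) \<le> lr n + Suc n" using tape1_inv[of n] by auto
      then show ?thesis using content_le_len[of "tp (Suc n)"] by simp
    qed
  qed
  moreover have "lr (Suc n) = max (lr n) (length (tape_content (tp (Suc n))))" by simp
  ultimately show ?thesis by (simp add: max_def)
qed

definition Bf :: "nat \<Rightarrow> nat" where
  "Bf v = v + poly p v + 1 + size_fn \<phi> v"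

lemma Bf_mono: "x \<le> y \<Longrightarrow> Bf x \<le> Bf y"
  unfolding Bf_def using poly_mono_nat[of x y p] size_fn_mono[of x y \<phi>] by simp

lemma Bf_ge: "x \<le> Bf x" by (simp add: Bf_def)

lemma Bf_iter_mono: "x \<le> y \<Longrightarrow> (Bf ^^ k) x \<le> (Bf ^^ k) y"
  by (induction k) (simp_all add: Bf_mono)

lemma Bf_iter_k: "k \<le> k' \<Longrightarrow> (Bf ^^ k) x \<le> (Bf ^^ k') x"
proof (induction k' arbitrary: k)
  case 0 then show ?case by simp
next
  case (Suc k')
  show ?case
  proof (cases "k = Suc k'")
    case False
    then have "(Bf ^^ k) x \<le> (Bf ^^ k') x" using Suc by simp
    also have "\<dots> \<le> Bf ((Bf ^^ k') x)" by (rule Bf_ge)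
    finally show ?thesis by simp
  qed simp
qed

lemma main_bound: "enat n \<le> otm_time M \<phi> a \<Longrightarrow> lr n \<le> (Bf ^^ card (lr ` {..n})) (length a)"
proof (induction n)
  case 0 then show ?case using Bf_ge[of "length a"] by simp
next
  case (Suc n)
  have "enat n \<le> enat (Suc n)" by simp
  then have en: "enat n \<le> otm_time M \<phi> a" using Suc.prems by (rule order_trans)
  have IH: "lr n \<le> (Bf ^^ card (lr ` {..n})) (length a)" using Suc.IH en by simp
  have scn: "n \<le> poly p (lr n)" using sc en by (simp add: is_step_count_def)
  show ?case
  proof (cases "lr (Suc n) = lr n")
    case True
    then have "lr ` {..Suc n} = lr ` {..n}" by (auto simp: atMost_Suc simp del: length_rev.simps)
    then show ?thesis using IH True by simp
  next
    case False
    then have gt: "lr n < lr (Suc n)" using lr_mono[of n "Suc n" M \<phi> a] by simp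
    have notin: "lr (Suc n) \<notin> lr ` {..n}"
    proof
      assume "lr (Suc n) \<in> lr ` {..n}"
      then obtain m where "m \<le> n" "lr (Suc n) = lr m" by auto
      then show False using lr_mono[of m n M \<phi> a] gt by simp
    qed
    have "lr ` {..Suc n} = insert (lr (Suc n)) (lr ` {..n})" by (simp add: atMost_Suc)
    then have card: "card (lr ` {..Suc n}) = Suc (card (lr ` {..n}))" using notin by simp
    have "lr (Suc n) \<le> lr n + Suc n + size_fn \<phi> (lr n)" by (rule jump_bound)
    also have "\<dots> \<le> Bf (lr n)" using scn by (simp add: Bf_def)
    also have "\<dots> \<le> Bf ((Bf ^^ card (lr ` {..n})) (length a))" by (rule Bf_mono[OF IH])
    finally show ?thesis using card by simp
  qed
qed

end

lemma sop_comp_poly: "Q \<in> second_order_poly \<Longrightarrow> (\<lambda>l n. poly p (Q l n)) \<in> second_order_poly"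
proof (induction p rule: pCons_induct)
  case 0
  have "(\<lambda>l n. poly (0::nat poly) n) \<in> second_order_poly" by (rule sop_poly)
  then show ?case by simp
next
  case (pCons c p)
  have "(\<lambda>l n. poly [:c:] n + Q l n * poly p (Q l n)) \<in> second_order_poly"
    by (intro sop_add sop_mult sop_poly pCons)
  then show ?case by simp
qed

definition Bfl :: "nat poly \<Rightarrow> (nat \<Rightarrow> nat) \<Rightarrow> nat \<Rightarrow> nat" where
  "Bfl p l v = v + poly p v + 1 + l v"

lemma sop_iter: "(\<lambda>l n. (Bfl p l ^^ k) n) \<in> second_order_poly"
proof (induction k)
  case 0
  have "(\<lambda>l n. poly [:0, 1:] n) \<in> second_order_poly" by (rule sop_poly)
  then show ?case by simp
next
  case (Suc k)
  let ?Q = "\<lambda>l n. (Bfl p l ^^ k) n"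
  have "(\<lambda>l n. ?Q l n + poly p (?Q l n) + poly [:1:] n + l (?Q l n)) \<in> second_order_poly"
    by (intro sop_add sop_comp_poly sop_poly sop_app Suc)
  moreover have "(\<lambda>l n. (Bfl p l ^^ Suc k) n) = (\<lambda>l n. ?Q l n + poly p (?Q l n) + poly [:1:] n + l (?Q l n))"
    by (rule ext, rule ext, simp only: funpow.simps(2) comp_apply Bfl_def) simp
  ultimately show ?case by simp
qed

lemma strong_imp_poly: "strongly_poly_time_computable G \<Longrightarrow> poly_time_computable G"
proof -
  assume "strongly_poly_time_computable G"
  then obtain M p where comp: "computes M G" and fr: "finite_length_revision M"
    and sc: "is_step_count M (\<lambda>n. poly p n)"
    unfolding strongly_poly_time_computable_def by blast
  obtain N where fin: "\<forall>\<phi> a. finite (range (length_rev M \<phi> a)) \<and> card (range (length_rev M \<phi> a)) \<le> N"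
    using fr unfolding finite_length_revision_def by blast
  have wf: "wf_otm M" using comp unfolding computes_def by blast
  define P where "P = (\<lambda>l n. poly p ((Bfl p l ^^ N) n))"
  have sopP: "P \<in> second_order_poly" unfolding P_def by (intro sop_comp_poly sop_iter)
  have "otm_time M \<phi> a \<le> enat (P (size_fn \<phi>) (length a))" for \<phi> a
  proof -
    interpret strong M p \<phi> a by unfold_locales (rule wf, rule sc)
    have Beq: "Bfl p (size_fn \<phi>) = Bf" by (simp add: fun_eq_iff Bfl_def Bf_def)
    obtain n where "halted M (otm_run M \<phi> a n)" using comp unfolding computes_def by blast
    then have ex: "\<exists>n. halted M (otm_run M \<phi> a n)" by blast
    define T where "T = (LEAST n. halted M (otm_run M \<phi> a n))"
    have ot: "otm_time M \<phi> a = enat T" using ex by (simp add: otm_time_def T_def)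
    have "T \<le> poly p (lr T)" using sc ot by (simp add: is_step_count_def)
    also have "\<dots> \<le> poly p ((Bf ^^ card (lr ` {..T})) (length a))"
      by (rule poly_mono_nat, rule main_bound) (simp add: ot)
    also have "\<dots> \<le> poly p ((Bf ^^ N) (length a))"
    proof (rule poly_mono_nat, rule Bf_iter_k)
      have "card (lr ` {..T}) \<le> card (range lr)" using fin by (intro card_mono) auto
      then show "card (lr ` {..T}) \<le> N" using fin by (meson order_trans)
    qed
    finally show ?thesis by (simp add: ot P_def Beq)
  qed
  then show ?thesis unfolding poly_time_computable_def using comp sopP by blast
qed


theorem mainTheorem11:
  shows "\<exists>F :: bfun \<Rightarrow> bstr \<Rightarrow> bstr.
           poly_time_computable F \<and>
           \<not> (\<exists>M. computes M F \<and> finite_length_revision M) \<and>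
           \<not> strongly_poly_time_computable F \<and>
           {G. strongly_poly_time_computable G} \<subset> {G. poly_time_computable G}"
proof (intro exI conjI)
  show "poly_time_computable F0" by (rule poly_F0)
  show "\<not> (\<exists>M. computes M F0 \<and> finite_length_revision M)" by (rule not_finrev)
  show ns: "\<not> strongly_poly_time_computable F0"
    using not_finrev unfolding strongly_poly_time_computable_def by blast
  show "{G. strongly_poly_time_computable G} \<subset> {G. poly_time_computable G}"
  proof (rule psubsetI)
    show "{G. strongly_poly_time_computable G} \<subseteq> {G. poly_time_computable G}"
      using strong_imp_poly by blast
    show "{G. strongly_poly_time_computable G} \<noteq> {G. poly_time_computable G}"
      using ns poly_F0 by blast
  qed
qed

end
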